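(* Let $H$ and $H_j$ be $n$-qubit Hermitian operators, each with at most $m$ nonzero Pauli coefficients, and let $T\in\mathbb R$. Let $W$ be any Hermitian operator with $\|W\|_\infty<\pi$ such that $e^{-iW}=e^{i\phi}e^{iHT}e^{-iH_jT}$ for some $\phi\in\mathbb R$. Then $W$ has at most $4^m$ nonzero Pauli coefficients.
   Context: Pauli operators are labelled by $v\in\mathbb F_2^{2n}$, $P_v\in\{I,X,Y,Z\}^{\otimes n}$ (identity labelled $0$); every $n$-qubit operator has a unique expansion in the $P_v$. The number of nonzero coefficients of $W$ in this expansion is its Pauli sparsity $\operatorname{supp}_P(W)$. $\|\cdot\|_\infty$ is the operator norm. *)

theory Defs
  imports "HOL-Analysis.Analysis" "Jordan_Normal_Form.Matrix"
begin

text \<open>n-qubit operators are complex matrices of dimension 2^n (JNF type complex mat).\<close>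

definition is_hermitian :: "complex mat \<Rightarrow> bool" where
  "is_hermitian A \<longleftrightarrow> square_mat A \<and>
     (\<forall>i < dim_row A. \<forall>j < dim_row A. A $$ (i, j) = cnj (A $$ (j, i)))"

definition mtrace :: "complex mat \<Rightarrow> complex" where
  "mtrace A = (\<Sum>i < dim_row A. A $$ (i, i))"

definition mexp :: "complex mat \<Rightarrow> complex mat" where
  "mexp A = mat (dim_row A) (dim_col A)
     (\<lambda>(i, j). \<Sum>k. (A ^\<^sub>m k) $$ (i, j) / of_nat (fact k))"

definition vnorm :: "complex vec \<Rightarrow> real" where
  "vnorm x = sqrt (\<Sum>i < dim_vec x. (cmod (x $ i))^2)"

definition op_norm :: "complex mat \<Rightarrow> real" where
  "op_norm A = Sup {vnorm (A *\<^sub>v x) | x. x \<in> carrier_vec (dim_col A) \<and> vnorm x \<le> 1}"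

text \<open>Single-qubit Paulis: 0 = I, 1 = X, 2 = Y, 3 = Z.\<close>
definition pauli1 :: "nat \<Rightarrow> complex mat" where
  "pauli1 a = (if a = 1 then mat_of_rows_list 2 [[0, 1], [1, 0]]
     else if a = 2 then mat_of_rows_list 2 [[0, -\<i>], [\<i>, 0]]
     else if a = 3 then mat_of_rows_list 2 [[1, 0], [0, -1]]
     else mat_of_rows_list 2 [[1, 0], [0, 1]])"

text \<open>Pauli strings on n qubits: lists of length n over {0,1,2,3}
  (in bijection with labels v in F_2^{2n}); identity is the all-zero string.\<close>
definition pauli_strings :: "nat \<Rightarrow> nat list set" where
  "pauli_strings n = {s. length s = n \<and> set s \<subseteq> {0..3}}"

text \<open>Tensor product P_s = P_{s_0} (x) ... (x) P_{s_{n-1}}; qubit k is bit k of the index.\<close>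
definition pauli_op :: "nat \<Rightarrow> nat list \<Rightarrow> complex mat" where
  "pauli_op n s = mat (2^n) (2^n)
     (\<lambda>(i, j). \<Prod>k < n. pauli1 (s ! k) $$ (i div 2^k mod 2, j div 2^k mod 2))"

text \<open>Coefficient of P_s in the (unique) Pauli expansion W = sum_s c_s P_s.\<close>
definition pauli_coeff :: "nat \<Rightarrow> complex mat \<Rightarrow> nat list \<Rightarrow> complex" where
  "pauli_coeff n W s = mtrace (pauli_op n s * W) / 2^n"

definition pauli_sparsity :: "nat \<Rightarrow> complex mat \<Rightarrow> nat" where
  "pauli_sparsity n W = card {s \<in> pauli_strings n. pauli_coeff n W s \<noteq> 0}"

end

theory Submission
  imports Defs Jordan_Normal_Form.Jordan_Normal_Form_Existence Jordan_Normal_Form.Jordan_Normal_Form_Uniqueness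
begin

lemma mult_entry:
  assumes "A \<in> carrier_mat a b" "B \<in> carrier_mat b c" "i < a" "j < c"
  shows "(A * B) $$ (i, j) = (\<Sum>l<b. A $$ (i, l) * B $$ (l, j))"
  using assms by (auto simp: scalar_prod_def atLeast0LessThan intro!: sum.cong)

lemma sum_even_odd: "(\<Sum>l<2*m. f l) = (\<Sum>l<m. f (2*l) + f (2*l+1::nat))" for f :: "nat \<Rightarrow> 'a::comm_monoid_add"
proof (induction m)
  case (Suc m)
  have "{..<2 * Suc m} = insert (2*m+1) (insert (2*m) {..<2*m})" by auto
  then show ?case using Suc by (simp add: ac_simps)
qed simp

lemma bit_Suc: "(2*l + b) div 2^(Suc k) mod 2 = l div 2^k mod (2::nat)" if "b < 2" for b l k :: nat
proof -
  have "(2*l + b) div 2^(Suc k) = ((2*l+b) div 2) div 2^k" by (simp add: div_mult2_eq mult.commute)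
  also have "(2*l+b) div 2 = l" using that by simp
  finally show ?thesis by simp
qed

lemma bitsum:
  "(\<Sum>l<2^n. \<Prod>k<n. g k (l div 2^k mod 2)) = (\<Prod>k<n. g k 0 + g k (1::nat)) "
  for g :: "nat \<Rightarrow> nat \<Rightarrow> 'a::comm_semiring_1"
proof (induction n arbitrary: g)
  case 0 then show ?case by simp
next
  case (Suc n)
  have e: "(\<Prod>k<Suc n. g k ((2*l+b) div 2^k mod 2)) = g 0 b * (\<Prod>k<n. g (Suc k) (l div 2^k mod 2))"
    if "b < 2" for l b :: nat
    using that unfolding prod.lessThan_Suc_shift by (simp add: bit_Suc[simplified] del: prod.lessThan_Suc)
  have "(\<Sum>l<2^Suc n. \<Prod>k<Suc n. g k (l div 2^k mod 2))
      = (\<Sum>l<2^n. (\<Prod>k<Suc n. g k ((2*l+0) div 2^k mod 2)) + (\<Prod>k<Suc n. g k ((2*l+1) div 2^k mod 2)))"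
    by (simp add: sum_even_odd)
  also have "\<dots> = (\<Sum>l<2^n. (g 0 0 + g 0 1) * (\<Prod>k<n. g (Suc k) (l div 2^k mod 2)))"
    by (subst e, simp, subst e, simp, simp add: algebra_simps)
  also have "\<dots> = (g 0 0 + g 0 1) * (\<Prod>k<n. g (Suc k) 0 + g (Suc k) 1)"
    by (simp only: sum_distrib_left[symmetric] Suc.IH[of "\<lambda>k. g (Suc k)"])
  also have "\<dots> = (\<Prod>k<Suc n. g k 0 + g k 1)" unfolding prod.lessThan_Suc_shift by simp
  finally show ?case .
qed

lemma bits_eq: "a < 2^n \<Longrightarrow> b < 2^n \<Longrightarrow> (\<forall>k<n. a div 2^k mod 2 = b div 2^k mod (2::nat)) \<Longrightarrow> a = b"
proof (induction n arbitrary: a b)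
  case 0 then show ?case by simp
next
  case (Suc n)
  have "a mod 2 = b mod 2" using Suc.prems(3)[rule_format, of 0] by simp
  moreover have "a div 2 = b div 2"
  proof (rule Suc.IH)
    show "a div 2 < 2^n" "b div 2 < 2^n" using Suc.prems by auto
    show "\<forall>k<n. a div 2 div 2 ^ k mod 2 = b div 2 div 2 ^ k mod 2"
      using Suc.prems(3) by (auto simp: div_mult2_eq)
  qed
  ultimately show ?case by (metis div_mult_mod_eq)
qed

definition s1 :: "nat \<Rightarrow> nat \<Rightarrow> nat \<Rightarrow> complex" where
  "s1 a x y = (if a = 1 then (if x \<noteq> y then 1 else 0)
     else if a = 2 then (if x = 0 \<and> y = 1 then -\<i> else if x = 1 \<and> y = 0 then \<i> else 0)
     else if a = 3 then (if x = y then (if x = 0 then 1 else -1) else 0)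
     else (if x = y then 1 else 0))"

lemma pauli1_entry: "x < 2 \<Longrightarrow> y < 2 \<Longrightarrow> pauli1 a $$ (x, y) = s1 a x y"
  unfolding less_2_cases_iff apply (elim disjE)
  by (simp_all add: pauli1_def s1_def mat_of_rows_list_def)

definition lx :: "nat \<Rightarrow> nat \<Rightarrow> nat" where
  "lx a b = 2 * ((a div 2 + b div 2) mod 2) + (a + b) mod 2"

definition ph1 :: "nat \<Rightarrow> nat \<Rightarrow> complex" where
  "ph1 a b = (if a = 0 \<or> b = 0 \<or> a = b then 1
     else if (a = 1 \<and> b = 2) \<or> (a = 2 \<and> b = 3) \<or> (a = 3 \<and> b = 1) then \<i> else -\<i>)"

lemma four_cases: "(a::nat) \<le> 3 \<Longrightarrow> a = 0 \<or> a = 1 \<or> a = 2 \<or> a = 3" by auto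

lemma s1_mult: assumes "a \<le> 3" "b \<le> 3" "x < 2" "y < 2"
  shows "s1 a x 0 * s1 b 0 y + s1 a x 1 * s1 b 1 y = ph1 a b * s1 (lx a b) x y"
  using four_cases[OF assms(1)] four_cases[OF assms(2)] assms(3,4)[unfolded less_2_cases_iff]
  apply (elim disjE)
  apply (simp_all add: s1_def ph1_def lx_def)
  done

lemma s1_compl: assumes "a < 2" "b < 2" "i < 2" "j < 2"
  shows "(\<Sum>c<4. s1 c a b * s1 c i j) = (if a = j \<and> b = i then 2 else 0)"
proof -
  have e: "(\<Sum>c<4. f c) = f 0 + f 1 + f 2 + f 3" for f :: "nat \<Rightarrow> complex"
    by (simp add: numeral_eq_Suc)
  show ?thesis unfolding e using assms[unfolded less_2_cases_iff]
    apply (elim disjE)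
    apply (simp_all add: s1_def)
    done
qed

lemma s1_trace: "a \<le> 3 \<Longrightarrow> s1 a 0 0 + s1 a 1 1 = (if a = 0 then 2 else 0)"
  using four_cases[of a] by (auto simp: s1_def)

lemma lx_le: "a \<le> 3 \<Longrightarrow> b \<le> 3 \<Longrightarrow> lx a b \<le> 3"
  unfolding lx_def by simp

lemma lx_zero_iff: "a \<le> 3 \<Longrightarrow> b \<le> 3 \<Longrightarrow> lx a b = 0 \<longleftrightarrow> a = b"
  using four_cases[of a] four_cases[of b] by (auto simp: lx_def)

lemma lx_comm: "lx a b = lx b a" unfolding lx_def by (simp add: ac_simps)
lemma lx_0: "a \<le> 3 \<Longrightarrow> lx 0 a = a" using four_cases[of a] by (auto simp: lx_def)
lemma lx_self: "a \<le> 3 \<Longrightarrow> lx a a = 0" using four_cases[of a] by (auto simp: lx_def)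
lemma lx_assoc: assumes "a \<le> 3" "b \<le> 3" "c \<le> 3" shows "lx (lx a b) c = lx a (lx b c)"
  using four_cases[OF assms(1)] four_cases[OF assms(2)] four_cases[OF assms(3)] apply (elim disjE) by (simp_all add: lx_def)
lemma ph1_self: "ph1 a a = 1" by (simp add: ph1_def)

definition sxor :: "nat list \<Rightarrow> nat list \<Rightarrow> nat list" where
  "sxor s t = map2 lx s t"

definition phs :: "nat \<Rightarrow> nat list \<Rightarrow> nat list \<Rightarrow> complex" where
  "phs n s t = (\<Prod>k<n. ph1 (s ! k) (t ! k))"

abbreviation bt :: "nat \<Rightarrow> nat \<Rightarrow> nat" where "bt i k \<equiv> i div 2^k mod 2"

lemma strings_iff: "s \<in> pauli_strings n \<longleftrightarrow> length s = n \<and> (\<forall>k<n. s ! k \<le> 3)"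
  unfolding pauli_strings_def by (auto simp: set_conv_nth)

lemma sxor_length[simp]: "length (sxor s t) = min (length s) (length t)"
  by (simp add: sxor_def)

lemma sxor_nth: "k < length s \<Longrightarrow> k < length t \<Longrightarrow> sxor s t ! k = lx (s ! k) (t ! k)"
  by (simp add: sxor_def)

lemma sxor_strings: "s \<in> pauli_strings n \<Longrightarrow> t \<in> pauli_strings n \<Longrightarrow> sxor s t \<in> pauli_strings n"
  by (auto simp: strings_iff sxor_nth lx_le)

lemma pauli_op_carrier[simp]: "pauli_op n s \<in> carrier_mat (2^n) (2^n)"
  by (simp add: pauli_op_def)

lemma pauli_op_dim[simp]: "dim_row (pauli_op n s) = 2^n" "dim_col (pauli_op n s) = 2^n"
  by (simp_all add: pauli_op_def)

lemma pauli_op_entry: "i < 2^n \<Longrightarrow> j < 2^n \<Longrightarrow>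
  pauli_op n s $$ (i, j) = (\<Prod>k<n. s1 (s ! k) (bt i k) (bt j k))"
  by (simp add: pauli_op_def pauli1_entry)

lemma pauli_mult:
  assumes s: "s \<in> pauli_strings n" and t: "t \<in> pauli_strings n"
  shows "pauli_op n s * pauli_op n t = phs n s t \<cdot>\<^sub>m pauli_op n (sxor s t)"
proof (rule eq_matI)
  fix i j assume i: "i < dim_row (phs n s t \<cdot>\<^sub>m pauli_op n (sxor s t))"
    and j: "j < dim_col (phs n s t \<cdot>\<^sub>m pauli_op n (sxor s t))"
  then have i: "i < 2^n" and j: "j < 2^n" by auto
  have "(pauli_op n s * pauli_op n t) $$ (i, j)
     = (\<Sum>l<2^n. pauli_op n s $$ (i, l) * pauli_op n t $$ (l, j))"
    by (rule mult_entry[OF pauli_op_carrier pauli_op_carrier i j])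
  also have "\<dots> = (\<Sum>l<2^n. \<Prod>k<n. s1 (s ! k) (bt i k) (bt l k) * s1 (t ! k) (bt l k) (bt j k))"
    by (rule sum.cong, simp, simp add: pauli_op_entry i j prod.distrib)
  also have "\<dots> = (\<Prod>k<n. s1 (s ! k) (bt i k) 0 * s1 (t ! k) 0 (bt j k)
                        + s1 (s ! k) (bt i k) 1 * s1 (t ! k) 1 (bt j k))"
    by (rule bitsum[where g = "\<lambda>k c. s1 (s ! k) (bt i k) c * s1 (t ! k) c (bt j k)"])
  also have "\<dots> = (\<Prod>k<n. ph1 (s ! k) (t ! k) * s1 (lx (s ! k) (t ! k)) (bt i k) (bt j k))"
    using s t by (intro prod.cong refl s1_mult) (auto simp: strings_iff)
  also have "\<dots> = phs n s t * pauli_op n (sxor s t) $$ (i, j)"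
    using s t by (simp add: prod.distrib phs_def pauli_op_entry i j sxor_nth strings_iff)
  finally show "(pauli_op n s * pauli_op n t) $$ (i, j) = (phs n s t \<cdot>\<^sub>m pauli_op n (sxor s t)) $$ (i, j)"
    using i j by simp
qed auto

lemma prod_ind: "(\<Prod>k<n. if P k then (c::complex) else 0) = (if \<forall>k<n. P k then c^n else 0)"
  by (induction n) (auto simp: less_Suc_eq)

lemma pauli_trace:
  assumes s: "s \<in> pauli_strings n"
  shows "mtrace (pauli_op n s) = (if s = replicate n 0 then 2^n else 0)"
proof -
  have "mtrace (pauli_op n s) = (\<Sum>i<2^n. \<Prod>k<n. s1 (s ! k) (bt i k) (bt i k))"
    unfolding mtrace_def by (simp add: pauli_op_entry)
  also have "\<dots> = (\<Prod>k<n. s1 (s ! k) 0 0 + s1 (s ! k) 1 1)"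
    by (rule bitsum[where g = "\<lambda>k c. s1 (s ! k) c c"])
  also have "\<dots> = (\<Prod>k<n. if s ! k = 0 then 2 else 0)"
    using s by (intro prod.cong refl s1_trace) (auto simp: strings_iff)
  also have "\<dots> = (if s = replicate n 0 then 2^n else 0)"
    using s by (simp add: prod_ind strings_iff list_eq_iff_nth_eq)
  finally show ?thesis .
qed

lemma mtrace_smult: "A \<in> carrier_mat d d \<Longrightarrow> mtrace (c \<cdot>\<^sub>m A) = c * mtrace A"
  unfolding mtrace_def by (simp add: sum_distrib_left)

lemma sxor_zero_iff:
  assumes "u \<in> pauli_strings n" "t \<in> pauli_strings n"
  shows "sxor u t = replicate n 0 \<longleftrightarrow> u = t"
  using assms by (auto simp: strings_iff list_eq_iff_nth_eq sxor_nth lx_zero_iff lx_self)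

lemma pauli_coeff_pauli:
  assumes u: "u \<in> pauli_strings n" and t: "t \<in> pauli_strings n"
  shows "pauli_coeff n (pauli_op n t) u = (if u = t then 1 else 0)"
proof -
  have "pauli_coeff n (pauli_op n t) u = phs n u t * mtrace (pauli_op n (sxor u t)) / 2^n"
    unfolding pauli_coeff_def pauli_mult[OF u t] mtrace_smult[OF pauli_op_carrier] ..
  also have "\<dots> = (if u = t then 1 else 0)"
    using u t by (simp add: pauli_trace sxor_strings sxor_zero_iff phs_def ph1_self)
  finally show ?thesis .
qed


lemma strings_Suc: "pauli_strings (Suc n) = (\<lambda>(s, c). s @ [c]) ` (pauli_strings n \<times> {..<4})"
proof
  show "pauli_strings (Suc n) \<subseteq> (\<lambda>(s, c). s @ [c]) ` (pauli_strings n \<times> {..<4})"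
  proof
    fix x assume x: "x \<in> pauli_strings (Suc n)"
    have l: "length x = Suc n" and st: "set x \<subseteq> {0..3}" using x by (auto simp: pauli_strings_def)
    then have ne: "x \<noteq> []" by auto
    then have xe: "x = butlast x @ [last x]" by simp
    have b: "butlast x \<in> pauli_strings n" using l st
      unfolding pauli_strings_def by (auto dest: in_set_butlastD)
    have "last x \<in> {0..3}" using st ne last_in_set by blast
    then have "last x < 4" by simp
    then show "x \<in> (\<lambda>(s, c). s @ [c]) ` (pauli_strings n \<times> {..<4})"
      using xe b by (intro image_eqI[of _ _ "(butlast x, last x)"]) auto
  qed
next
  show "(\<lambda>(s, c). s @ [c]) ` (pauli_strings n \<times> {..<4}) \<subseteq> pauli_strings (Suc n)"
    unfolding pauli_strings_def by (auto simp: subset_iff)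
qed
lemma strings_sum:
  "(\<Sum>s\<in>pauli_strings n. \<Prod>k<n. f k (s ! k)) = (\<Prod>k<n. \<Sum>c<4. f k c)"
  for f :: "nat \<Rightarrow> nat \<Rightarrow> complex"
proof (induction n)
  case 0
  have "pauli_strings 0 = {[]}" by (auto simp: pauli_strings_def)
  then show ?case by simp
next
  case (Suc n)
  have inj: "inj_on (\<lambda>(s, c). s @ [c]) (pauli_strings n \<times> {..<4::nat})" by (auto simp: inj_on_def)
  have "(\<Sum>s\<in>pauli_strings (Suc n). \<Prod>k<Suc n. f k (s ! k))
      = (\<Sum>(s, c)\<in>pauli_strings n \<times> {..<4}. \<Prod>k<Suc n. f k ((s @ [c]) ! k))"
    unfolding strings_Suc by (subst sum.reindex[OF inj]) (simp add: case_prod_unfold)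
  also have "\<dots> = (\<Sum>(s, c)\<in>pauli_strings n \<times> {..<4}. (\<Prod>k<n. f k (s ! k)) * f n c)"
  proof (rule sum.cong[OF refl], clarify)
    fix s c assume "s \<in> pauli_strings n"
    then have l: "length s = n" by (simp add: pauli_strings_def)
    show "(\<Prod>k<Suc n. f k ((s @ [c]) ! k)) = (\<Prod>k<n. f k (s ! k)) * f n c"
      unfolding prod.lessThan_Suc using l by (simp add: nth_append)
  qed
  also have "\<dots> = (\<Sum>s\<in>pauli_strings n. \<Prod>k<n. f k (s ! k)) * (\<Sum>c<4. f n c)"
    by (simp add: sum_product sum.cartesian_product)
  finally show ?case using Suc by simp
qed


lemma pauli_coeff_expand:
  assumes A: "A \<in> carrier_mat (2^n) (2^n)"
  shows "pauli_coeff n A u = (\<Sum>a<2^n. \<Sum>b<2^n. pauli_op n u $$ (a, b) * A $$ (b, a)) / 2^n"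
proof -
  have "mtrace (pauli_op n u * A) = (\<Sum>a<2^n. (pauli_op n u * A) $$ (a,a))"
    using A by (simp add: mtrace_def)
  also have "\<dots> = (\<Sum>a<2^n. \<Sum>b<2^n. pauli_op n u $$ (a, b) * A $$ (b, a))"
    by (rule sum.cong[OF refl], rule mult_entry[OF pauli_op_carrier A], auto)
  finally show ?thesis unfolding pauli_coeff_def by simp
qed

lemma prod_ind2: "(\<Prod>k<n. if P k then (c::complex) else 0) = (if \<forall>k<n. P k then c^n else 0)"
  by (induction n) (auto simp: less_Suc_eq)

lemma pauli_complete:
  assumes A: "A \<in> carrier_mat (2^n) (2^n)" and i: "i < 2^n" and j: "j < 2^n"
  shows "A $$ (i, j) = (\<Sum>s\<in>pauli_strings n. pauli_coeff n A s * pauli_op n s $$ (i, j))"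
proof -
  have key: "(\<Sum>s\<in>pauli_strings n. pauli_op n s $$ (a, b) * pauli_op n s $$ (i, j))
      = (if a = j \<and> b = i then 2^n else 0)" if a: "a < 2^n" and b: "b < 2^n" for a b
  proof -
    have "(\<Sum>s\<in>pauli_strings n. pauli_op n s $$ (a, b) * pauli_op n s $$ (i, j))
       = (\<Sum>s\<in>pauli_strings n. \<Prod>k<n. s1 (s ! k) (bt a k) (bt b k) * s1 (s ! k) (bt i k) (bt j k))"
      using a b i j by (simp add: pauli_op_entry prod.distrib)
    also have "\<dots> = (\<Prod>k<n. \<Sum>c<4. s1 c (bt a k) (bt b k) * s1 c (bt i k) (bt j k))"
      by (rule strings_sum[where f = "\<lambda>k c. s1 c (bt a k) (bt b k) * s1 c (bt i k) (bt j k)"])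
    also have "\<dots> = (\<Prod>k<n. if bt a k = bt j k \<and> bt b k = bt i k then 2 else 0)"
      by (intro prod.cong refl s1_compl) auto
    also have "\<dots> = (if a = j \<and> b = i then 2^n else 0)"
      unfolding prod_ind2 using bits_eq[OF a j] bits_eq[OF b i] by auto
    finally show ?thesis .
  qed
  have "(\<Sum>s\<in>pauli_strings n. pauli_coeff n A s * pauli_op n s $$ (i, j))
     = (\<Sum>s\<in>pauli_strings n. \<Sum>a<2^n. \<Sum>b<2^n. A $$ (b, a) * (pauli_op n s $$ (a, b) * pauli_op n s $$ (i, j)) / 2^n)"
    unfolding pauli_coeff_expand[OF A]
    by (intro sum.cong refl) (simp add: sum_distrib_left sum_distrib_right sum_divide_distrib mult_ac)
  also have "\<dots> = (\<Sum>a<2^n. \<Sum>b<2^n. A $$ (b, a) * (\<Sum>s\<in>pauli_strings n. pauli_op n s $$ (a, b) * pauli_op n s $$ (i, j)) / 2^n)"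
    by (simp add: sum_divide_distrib sum_distrib_left sum.swap[of _ "pauli_strings n"])
  also have "\<dots> = (\<Sum>a<2^n. \<Sum>b<2^n. A $$ (b, a) * (if a = j \<and> b = i then 2^n else 0) / 2^n)"
    by (intro sum.cong refl) (simp add: key)
  also have "\<dots> = (\<Sum>a<2^n. \<Sum>b<2^n. if a = j then (if b = i then A $$ (i, j) else 0) else 0)"
    by (intro sum.cong refl) auto
  also have "\<dots> = (\<Sum>a<2^n. if a = j then A $$ (i, j) else 0)"
    using i by (intro sum.cong refl) auto
  also have "\<dots> = A $$ (i, j)"
    using j by simp
  finally show ?thesis by simp
qed

lemma coeff_lin:
  assumes A: "A \<in> carrier_mat (2^n) (2^n)" and X: "finite X"
    and M: "\<And>x. x \<in> X \<Longrightarrow> M x \<in> carrier_mat (2^n) (2^n)"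
    and e: "\<And>i j. i < 2^n \<Longrightarrow> j < 2^n \<Longrightarrow> A $$ (i, j) = (\<Sum>x\<in>X. c x * M x $$ (i, j))"
  shows "pauli_coeff n A u = (\<Sum>x\<in>X. c x * pauli_coeff n (M x) u)"
proof -
  have "pauli_coeff n A u = (\<Sum>a<2^n. \<Sum>b<2^n. \<Sum>x\<in>X. c x * (pauli_op n u $$ (a, b) * M x $$ (b, a))) / 2^n"
    unfolding pauli_coeff_expand[OF A]
    by (simp add: e sum_distrib_left ac_simps)
  also have "\<dots> = (\<Sum>x\<in>X. c x * ((\<Sum>a<2^n. \<Sum>b<2^n. pauli_op n u $$ (a, b) * M x $$ (b, a)) / 2^n))"
    by (simp add: sum_divide_distrib sum_distrib_left sum.swap[of _ X])
  also have "\<dots> = (\<Sum>x\<in>X. c x * pauli_coeff n (M x) u)"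
    by (intro sum.cong refl) (simp add: pauli_coeff_expand[OF M])
  finally show ?thesis .
qed

definition inK :: "nat \<Rightarrow> nat list set \<Rightarrow> complex mat \<Rightarrow> bool" where
  "inK n K A \<longleftrightarrow> (\<forall>u \<in> pauli_strings n - K. pauli_coeff n A u = 0)"

lemma inK_lin:
  assumes A: "A \<in> carrier_mat (2^n) (2^n)" and X: "finite X"
    and M: "\<And>x. x \<in> X \<Longrightarrow> M x \<in> carrier_mat (2^n) (2^n)"
    and MK: "\<And>x. x \<in> X \<Longrightarrow> inK n K (M x)"
    and e: "\<And>i j. i < 2^n \<Longrightarrow> j < 2^n \<Longrightarrow> A $$ (i, j) = (\<Sum>x\<in>X. c x * M x $$ (i, j))"
  shows "inK n K A"
  unfolding inK_def
proof
  fix u assume u: "u \<in> pauli_strings n - K"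
  have "pauli_coeff n A u = (\<Sum>x\<in>X. c x * pauli_coeff n (M x) u)"
    by (rule coeff_lin[OF A X M e])
  then show "pauli_coeff n A u = 0"
    using MK u by (simp add: inK_def)
qed

lemma inK_smult: "A \<in> carrier_mat (2^n) (2^n) \<Longrightarrow> inK n K A \<Longrightarrow> inK n K (c \<cdot>\<^sub>m A)"
  by (rule inK_lin[where X = "{0::nat}" and M = "\<lambda>_. A" and c = "\<lambda>_. c"]) auto

lemma inK_one: "replicate n 0 \<in> K \<Longrightarrow> inK n K (1\<^sub>m (2^n))"
  unfolding inK_def pauli_coeff_def
  by (auto simp: pauli_trace)

lemma inK_pauli: "s \<in> K \<Longrightarrow> K \<subseteq> pauli_strings n \<Longrightarrow> inK n K (pauli_op n s)"
  unfolding inK_def by (auto simp: pauli_coeff_pauli)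

lemma inK_mult:
  assumes K: "K \<subseteq> pauli_strings n" and cl: "\<And>s t. s \<in> K \<Longrightarrow> t \<in> K \<Longrightarrow> sxor s t \<in> K"
    and A: "A \<in> carrier_mat (2^n) (2^n)" and B: "B \<in> carrier_mat (2^n) (2^n)"
    and AK: "inK n K A" and BK: "inK n K B"
  shows "inK n K (A * B)"
proof -
  let ?S = "pauli_strings n"
  let ?a = "pauli_coeff n A" and ?b = "pauli_coeff n B"
  have fin: "finite ?S" 
  proof -
    have "?S \<subseteq> {xs. set xs \<subseteq> {0..3} \<and> length xs = n}" by (auto simp: pauli_strings_def)
    then show ?thesis using finite_lists_length_eq[of "{0..3::nat}" n] finite_subset by blast
  qed
  have e: "(A * B) $$ (i, j) = (\<Sum>p\<in>?S \<times> ?S. (?a (fst p) * ?b (snd p) * phs n (fst p) (snd p))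
       * pauli_op n (sxor (fst p) (snd p)) $$ (i, j))" if i: "i < 2^n" and j: "j < 2^n" for i j
  proof -
    have "(A * B) $$ (i, j) = (\<Sum>l<2^n. A $$ (i, l) * B $$ (l, j))"
      by (rule mult_entry[OF A B i j])
    also have "\<dots> = (\<Sum>l<2^n. (\<Sum>s\<in>?S. ?a s * pauli_op n s $$ (i, l)) * (\<Sum>t\<in>?S. ?b t * pauli_op n t $$ (l, j)))"
      using i j by (intro sum.cong refl) (simp add: pauli_complete[OF A, symmetric] pauli_complete[OF B, symmetric])
    also have "\<dots> = (\<Sum>l<2^n. \<Sum>s\<in>?S. \<Sum>t\<in>?S. ?a s * ?b t * (pauli_op n s $$ (i, l) * pauli_op n t $$ (l, j)))"
      by (simp add: sum_product mult_ac)
    also have "\<dots> = (\<Sum>s\<in>?S. \<Sum>t\<in>?S. \<Sum>l<2^n. ?a s * ?b t * (pauli_op n s $$ (i, l) * pauli_op n t $$ (l, j)))"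
      by (subst sum.swap, rule sum.cong[OF refl], rule sum.swap)
    also have "\<dots> = (\<Sum>s\<in>?S. \<Sum>t\<in>?S. ?a s * ?b t * (\<Sum>l<2^n. pauli_op n s $$ (i, l) * pauli_op n t $$ (l, j)))"
      by (simp add: sum_distrib_left)
    also have "\<dots> = (\<Sum>s\<in>?S. \<Sum>t\<in>?S. ?a s * ?b t * (pauli_op n s * pauli_op n t) $$ (i, j))"
      using i j by (intro sum.cong refl) (simp only: mult_entry[OF pauli_op_carrier pauli_op_carrier])
    also have "\<dots> = (\<Sum>s\<in>?S. \<Sum>t\<in>?S. ?a s * ?b t * phs n s t * pauli_op n (sxor s t) $$ (i, j))"
      using i j by (intro sum.cong refl) (simp add: pauli_mult)
    also have "\<dots> = (\<Sum>p\<in>?S \<times> ?S. (?a (fst p) * ?b (snd p) * phs n (fst p) (snd p))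
       * pauli_op n (sxor (fst p) (snd p)) $$ (i, j))"
      by (simp add: sum.cartesian_product case_prod_unfold)
    finally show ?thesis .
  qed
  show ?thesis
    unfolding inK_def
  proof
    fix u assume u: "u \<in> ?S - K"
    have "pauli_coeff n (A * B) u = (\<Sum>p\<in>?S \<times> ?S. (?a (fst p) * ?b (snd p) * phs n (fst p) (snd p))
       * pauli_coeff n (pauli_op n (sxor (fst p) (snd p))) u)"
      by (rule coeff_lin[OF mult_carrier_mat[OF A B] finite_cartesian_product[OF fin fin] _ e]) auto
    also have "\<dots> = 0"
    proof (rule sum.neutral, rule ballI)
      fix p assume "p \<in> ?S \<times> ?S"
      then obtain s t where p: "p = (s, t)" and s: "s \<in> ?S" and t: "t \<in> ?S" by auto
      show "?a (fst p) * ?b (snd p) * phs n (fst p) (snd p) * pauli_coeff n (pauli_op n (sxor (fst p) (snd p))) u = 0"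
      proof (cases "s \<in> K \<and> t \<in> K")
        case True
        then have "sxor s t \<in> K" using cl by blast
        then have "u \<noteq> sxor s t" using u by blast
        then show ?thesis using u s t p by (simp add: pauli_coeff_pauli sxor_strings)
      next
        case False
        then show ?thesis using AK BK s t p by (auto simp: inK_def)
      qed
    qed
    finally show "pauli_coeff n (A * B) u = 0" .
  qed
qed

lemma inK_pow:
  assumes K: "K \<subseteq> pauli_strings n" and cl: "\<And>s t. s \<in> K \<Longrightarrow> t \<in> K \<Longrightarrow> sxor s t \<in> K"
    and z: "replicate n 0 \<in> K"
    and A: "A \<in> carrier_mat (2^n) (2^n)" and AK: "inK n K A"
  shows "inK n K (A ^\<^sub>m k)"
proof (induction k)
  case 0 have "dim_row A = 2^n" using A by simp
  then show ?case using inK_one[OF z] by simp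
next
  case (Suc k)
  then show ?case using inK_mult[OF K cl _ A _ AK] A by simp
qed

lemma pow_entry_bound:
  fixes A :: "complex mat"
  assumes A: "A \<in> carrier_mat d d" and i: "i < d" and j: "j < d"
  shows "norm ((A ^\<^sub>m k) $$ (i, j)) \<le> (\<Sum>a<d. \<Sum>b<d. norm (A $$ (a, b))) ^ k"
  using i j
proof (induction k arbitrary: i j)
  case 0 then show ?case using A by auto
next
  case (Suc k)
  let ?M = "\<Sum>a<d. \<Sum>b<d. norm (A $$ (a, b))"
  have "(A ^\<^sub>m Suc k) $$ (i, j) = (\<Sum>l<d. (A ^\<^sub>m k) $$ (i, l) * A $$ (l, j))"
    using A Suc.prems by (simp only: pow_mat.simps, intro mult_entry[of _ d d _ d]) auto
  then have "norm ((A ^\<^sub>m Suc k) $$ (i, j)) \<le> (\<Sum>l<d. norm ((A ^\<^sub>m k) $$ (i, l)) * norm (A $$ (l, j)))"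
    by (simp add: norm_mult[symmetric] sum_norm_le)
  also have "\<dots> \<le> (\<Sum>l<d. ?M ^ k * norm (A $$ (l, j)))"
    using Suc by (intro sum_mono mult_right_mono) auto
  also have "\<dots> = ?M ^ k * (\<Sum>l<d. norm (A $$ (l, j)))" by (simp add: sum_distrib_left)
  also have "\<dots> \<le> ?M ^ k * ?M"
  proof (rule mult_left_mono)
    show "(\<Sum>l<d. norm (A $$ (l, j))) \<le> ?M"
      using Suc.prems by (intro sum_mono member_le_sum[where f = "\<lambda>b. norm (A $$ (_, b))"]) auto
  qed (intro zero_le_power sum_nonneg norm_ge_zero)
  finally show ?case by (simp add: mult.commute)
qed

lemma summable_pow_entry:
  fixes A :: "complex mat"
  assumes A: "A \<in> carrier_mat d d" and i: "i < d" and j: "j < d"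
  shows "summable (\<lambda>k. c * ((A ^\<^sub>m k) $$ (i, j) / of_nat (fact k)))"
proof -
  let ?M = "\<Sum>a<d. \<Sum>b<d. norm (A $$ (a, b))"
  have "summable (\<lambda>k. norm c * (inverse (fact k) * ?M ^ k))"
    by (intro summable_mult summable_exp)
  then show ?thesis
  proof (rule summable_comparison_test')
    fix k
    have "norm (c * ((A ^\<^sub>m k) $$ (i, j) / of_nat (fact k))) = norm c * (norm ((A ^\<^sub>m k) $$ (i, j)) / fact k)"
      by (simp add: norm_mult norm_divide)
    also have "\<dots> \<le> norm c * (?M ^ k / fact k)"
      by (intro mult_left_mono divide_right_mono pow_entry_bound[OF A i j]) auto
    finally show "norm (c * ((A ^\<^sub>m k) $$ (i, j) / of_nat (fact k))) \<le> norm c * (inverse (fact k) * ?M ^ k)"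
      by (simp add: field_simps)
  qed
qed

lemma coeff_series:
  assumes A: "A \<in> carrier_mat (2^n) (2^n)"
    and M: "\<And>k. M k \<in> carrier_mat (2^n) (2^n)"
    and sm: "\<And>i j. i < 2^n \<Longrightarrow> j < 2^n \<Longrightarrow> (\<lambda>k. c k * M k $$ (i, j)) sums A $$ (i, j)"
  shows "(\<lambda>k. c k * pauli_coeff n (M k) u) sums pauli_coeff n A u"
proof -
  have "(\<lambda>k. (\<Sum>a<2^n. \<Sum>b<2^n. pauli_op n u $$ (a, b) * (c k * M k $$ (b, a))) / 2^n)
     sums ((\<Sum>a<2^n. \<Sum>b<2^n. pauli_op n u $$ (a, b) * A $$ (b, a)) / 2^n)"
    by (intro sums_divide sums_sum sums_mult sm) auto
  moreover have "(\<Sum>a<2^n. \<Sum>b<2^n. pauli_op n u $$ (a, b) * (c k * M k $$ (b, a))) / 2^n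
      = c k * pauli_coeff n (M k) u" for k
    unfolding pauli_coeff_expand[OF M]
    by (simp add: sum_distrib_left mult_ac)
  ultimately show ?thesis unfolding pauli_coeff_expand[OF A] by simp
qed

lemma mexp_carrier: "A \<in> carrier_mat d d \<Longrightarrow> mexp A \<in> carrier_mat d d"
  by (simp add: mexp_def)

lemma mexp_sums:
  fixes A :: "complex mat"
  assumes A: "A \<in> carrier_mat d d" and i: "i < d" and j: "j < d"
  shows "(\<lambda>k. (1 / of_nat (fact k)) * (A ^\<^sub>m k) $$ (i, j)) sums (mexp A $$ (i, j))"
proof -
  have "summable (\<lambda>k. 1 * ((A ^\<^sub>m k) $$ (i, j) / of_nat (fact k)))"
    by (rule summable_pow_entry[OF A i j])
  then have "(\<lambda>k. (A ^\<^sub>m k) $$ (i, j) / of_nat (fact k)) sums (mexp A $$ (i, j))"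
    using A i j by (simp add: mexp_def summable_sums)
  then show ?thesis by simp
qed

lemma inK_mexp:
  assumes K: "K \<subseteq> pauli_strings n" and cl: "\<And>s t. s \<in> K \<Longrightarrow> t \<in> K \<Longrightarrow> sxor s t \<in> K"
    and z: "replicate n 0 \<in> K"
    and A: "A \<in> carrier_mat (2^n) (2^n)" and AK: "inK n K A"
  shows "inK n K (mexp A)"
  unfolding inK_def
proof
  fix u assume u: "u \<in> pauli_strings n - K"
  have "(\<lambda>k. (1 / of_nat (fact k)) * pauli_coeff n (A ^\<^sub>m k) u) sums pauli_coeff n (mexp A) u"
    by (rule coeff_series[OF mexp_carrier[OF A] _ mexp_sums[OF A]]) (use A in auto)
  moreover have "pauli_coeff n (A ^\<^sub>m k) u = 0" for k
    using inK_pow[OF K cl z A AK, of k] u by (simp add: inK_def)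
  ultimately have "(\<lambda>k. 0) sums pauli_coeff n (mexp A) u" by simp
  then show "pauli_coeff n (mexp A) u = 0"
    using sums_unique2[OF _ sums_zero] by blast
qed

lemma strings_finite: "finite (pauli_strings n)"
proof -
  have "pauli_strings n \<subseteq> {xs. set xs \<subseteq> {0..3} \<and> length xs = n}" by (auto simp: pauli_strings_def)
  then show ?thesis using finite_lists_length_eq[of "{0..3::nat}" n] finite_subset by blast
qed

lemma sxor_comm: "sxor s t = sxor t s"
  by (simp add: sxor_def list_eq_iff_nth_eq lx_comm)

lemma sxor_assoc: "s \<in> pauli_strings n \<Longrightarrow> t \<in> pauli_strings n \<Longrightarrow> u \<in> pauli_strings n \<Longrightarrow>
  sxor (sxor s t) u = sxor s (sxor t u)"
  by (simp add: strings_iff list_eq_iff_nth_eq sxor_nth lx_assoc)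

lemma sxor_self: "s \<in> pauli_strings n \<Longrightarrow> sxor s s = replicate n 0"
  by (simp add: strings_iff list_eq_iff_nth_eq sxor_nth lx_self)

lemma sxor_zero: "s \<in> pauli_strings n \<Longrightarrow> sxor (replicate n 0) s = s"
  by (simp add: strings_iff list_eq_iff_nth_eq sxor_nth lx_0)

lemma zero_strings: "replicate n 0 \<in> pauli_strings n"
  by (auto simp: pauli_strings_def)

inductive_set gen :: "nat \<Rightarrow> nat list set \<Rightarrow> nat list set" for n S where
  gz: "replicate n 0 \<in> gen n S"
| gs: "u \<in> gen n S \<Longrightarrow> s \<in> S \<Longrightarrow> sxor s u \<in> gen n S"

lemma gen_sub: "S \<subseteq> pauli_strings n \<Longrightarrow> gen n S \<subseteq> pauli_strings n"
proof
  fix u assume S: "S \<subseteq> pauli_strings n" and u: "u \<in> gen n S"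
  from u show "u \<in> pauli_strings n"
    using S by (induction rule: gen.induct) (auto simp: zero_strings sxor_strings)
qed

lemma gen_closed:
  assumes S: "S \<subseteq> pauli_strings n" and u: "u \<in> gen n S" and v: "v \<in> gen n S"
  shows "sxor u v \<in> gen n S"
  using u
proof (induction rule: gen.induct)
  case gz
  then show ?case using sxor_zero v gen_sub[OF S] by auto
next
  case (gs u s)
  have "sxor (sxor s u) v = sxor s (sxor u v)"
    using gs gen_sub[OF S] S v by (intro sxor_assoc) auto
  then show ?case using gs by (auto intro: gen.gs)
qed

lemma gen_S: assumes "S \<subseteq> pauli_strings n" "s \<in> S" shows "s \<in> gen n S"
proof -
  have "sxor s (replicate n 0) \<in> gen n S" using assms by (intro gen.gs gen.gz)
  then show ?thesis using sxor_comm[of s "replicate n 0"] sxor_zero[of s n] assms by auto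
qed

lemma gen_insert:
  assumes S: "insert s F \<subseteq> pauli_strings n"
  shows "gen n (insert s F) \<subseteq> gen n F \<union> sxor s ` gen n F"
proof
  fix u assume "u \<in> gen n (insert s F)"
  then show "u \<in> gen n F \<union> sxor s ` gen n F"
  proof (induction rule: gen.induct)
    case gz then show ?case by (auto intro: gen.gz)
  next
    case (gs u t)
    have sF: "F \<subseteq> pauli_strings n" and s: "s \<in> pauli_strings n" using S by auto
    have t: "t \<in> pauli_strings n" using gs S by auto
    show ?case
    proof (cases "u \<in> gen n F")
      case True
      then show ?thesis using gs by (auto intro: gen.gs)
    next
      case False
      then obtain u' where u': "u' \<in> gen n F" "u = sxor s u'" using gs by auto
      have u's: "u' \<in> pauli_strings n" using u' gen_sub[OF sF] by auto
      show ?thesis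
      proof (cases "t = s")
        case True
        have "sxor t u = u'" unfolding True u'(2)
          using s u's by (simp add: sxor_assoc[symmetric] sxor_self sxor_zero)
        then show ?thesis using u' by auto
      next
        case False
        then have tF: "t \<in> F" using gs by auto
        have "sxor t u = sxor s (sxor t u')" unfolding u'(2)
          using s u's t by (simp add: sxor_assoc[symmetric] sxor_comm[of t s])
        then show ?thesis using u' tF by (auto intro: gen.gs)
      qed
    qed
  qed
qed

lemma gen_card:
  assumes "finite S" "S \<subseteq> pauli_strings n"
  shows "card (gen n S) \<le> 2 ^ card S"
  using assms
proof (induction S rule: finite_induct)
  case empty
  have "gen n {} \<subseteq> {replicate n 0}"
  proof
    fix u assume "u \<in> gen n {}" then show "u \<in> {replicate n 0}"
      by (induction rule: gen.induct) auto
  qed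
  then show ?case using card_mono[of "{replicate n 0}"] by auto
next
  case (insert s F)
  have fin: "finite (gen n F)" using gen_sub[of F n] insert strings_finite finite_subset by blast
  have "card (gen n (insert s F)) \<le> card (gen n F \<union> sxor s ` gen n F)"
    using gen_insert[OF insert.prems] fin by (intro card_mono) auto
  also have "\<dots> \<le> card (gen n F) + card (sxor s ` gen n F)" by (rule card_Un_le)
  also have "\<dots> \<le> card (gen n F) + card (gen n F)" using card_image_le[OF fin] by simp
  also have "\<dots> \<le> 2 ^ card F + 2 ^ card F" using insert by simp
  also have "\<dots> = 2 ^ card (insert s F)" using insert by simp
  finally show ?case .
qed

definition ip :: "complex vec \<Rightarrow> complex vec \<Rightarrow> complex" where
  "ip x y = (\<Sum>i<dim_vec x. cnj (x $ i) * y $ i)"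

lemma mult_vec_entry: "W \<in> carrier_mat d d \<Longrightarrow> y \<in> carrier_vec d \<Longrightarrow> i < d \<Longrightarrow>
  (W *\<^sub>v y) $ i = (\<Sum>j<d. W $$ (i, j) * y $ j)"
  by (auto simp: scalar_prod_def atLeast0LessThan intro!: sum.cong)

lemma herm_entry:
  assumes W: "W \<in> carrier_mat d d" "is_hermitian W" and i: "i < d" and j: "j < d"
  shows "cnj (W $$ (j, i)) = W $$ (i, j)"
proof -
  have "\<forall>i < dim_row W. \<forall>j < dim_row W. W $$ (i, j) = cnj (W $$ (j, i))"
    using W(2) unfolding is_hermitian_def by (rule conjunct2)
  then have "W $$ (i, j) = cnj (W $$ (j, i))" using W(1) i j by blast
  then show ?thesis by simp
qed
lemma herm_ip:
  assumes W: "W \<in> carrier_mat d d" "is_hermitian W" and x: "x \<in> carrier_vec d" and y: "y \<in> carrier_vec d"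
  shows "ip x (W *\<^sub>v y) = ip (W *\<^sub>v x) y"
proof -
  have h: "\<And>i j. i < d \<Longrightarrow> j < d \<Longrightarrow> cnj (W $$ (j, i)) = W $$ (i, j)"
    using herm_entry[OF W] by blast
  have "ip x (W *\<^sub>v y) = (\<Sum>i<d. cnj (x $ i) * (\<Sum>j<d. W $$ (i, j) * y $ j))"
    unfolding ip_def using x by (intro sum.cong) (auto simp del: index_mult_mat_vec simp add: mult_vec_entry[OF W(1) y])
  also have "\<dots> = (\<Sum>i<d. \<Sum>j<d. cnj (x $ i) * W $$ (i, j) * y $ j)"
    by (simp only: sum_distrib_left mult.assoc)
  also have "\<dots> = (\<Sum>j<d. \<Sum>i<d. cnj (x $ i) * W $$ (i, j) * y $ j)" by (rule sum.swap)
  also have "\<dots> = (\<Sum>j<d. (\<Sum>i<d. cnj (x $ i) * W $$ (i, j)) * y $ j)"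
    by (simp add: sum_distrib_right)
  also have "\<dots> = (\<Sum>j<d. cnj (\<Sum>i<d. W $$ (j, i) * x $ i) * y $ j)"
    by (intro sum.cong refl arg_cong2[where f = times]) (simp_all add: h mult.commute)
  also have "\<dots> = ip (W *\<^sub>v x) y"
    unfolding ip_def using x W by (intro sum.cong) (auto simp del: index_mult_mat_vec simp add: mult_vec_entry[OF W(1) x])
  finally show ?thesis .
qed

lemma ip_smult_right: "x \<in> carrier_vec d \<Longrightarrow> y \<in> carrier_vec d \<Longrightarrow> ip x (c \<cdot>\<^sub>v y) = c * ip x y"
  unfolding ip_def by (simp add: sum_distrib_left mult_ac)

lemma ip_smult_left: "x \<in> carrier_vec d \<Longrightarrow> y \<in> carrier_vec d \<Longrightarrow> ip (c \<cdot>\<^sub>v x) y = cnj c * ip x y"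
  unfolding ip_def by (simp add: sum_distrib_left mult_ac)

lemma ip_minus_left: "x \<in> carrier_vec d \<Longrightarrow> y \<in> carrier_vec d \<Longrightarrow> z \<in> carrier_vec d \<Longrightarrow>
   ip (x - y) z = ip x z - ip y z"
  unfolding ip_def by (simp add: sum_subtractf[symmetric] algebra_simps)

lemma ip_self_zero: assumes x: "x \<in> carrier_vec d" and z: "ip x x = 0" shows "x = 0\<^sub>v d"
proof -
  have "(\<Sum>i<d. cnj (x $ i) * x $ i) = (\<Sum>i<d. complex_of_real ((cmod (x $ i))^2))"
    by (intro sum.cong refl, subst complex_norm_square) (simp add: mult.commute)
  then have "complex_of_real (\<Sum>i<d. (cmod (x $ i))^2) = 0" using z x unfolding ip_def by simp
  then have "(\<Sum>i<d. (cmod (x $ i))^2) = 0" by (simp only: of_real_eq_0_iff)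
  then have "\<forall>i\<in>{..<d}. (cmod (x $ i))^2 = 0" by (subst (asm) sum_nonneg_eq_0_iff) auto
  then show ?thesis using x by (intro eq_vecI) auto
qed

lemma eigen_real:
  assumes W: "W \<in> carrier_mat d d" "is_hermitian W" and x: "x \<in> carrier_vec d" and nz: "x \<noteq> 0\<^sub>v d"
    and e: "W *\<^sub>v x = a \<cdot>\<^sub>v x"
  shows "cnj a = a"
proof -
  have "a * ip x x = cnj a * ip x x"
    using herm_ip[OF W x x] e x by (simp add: ip_smult_right[OF x x] ip_smult_left[OF x x])
  moreover have "ip x x \<noteq> 0" using ip_self_zero[OF x] nz by auto
  ultimately show ?thesis by simp
qed

lemma char_matrix_mult_vec:
  assumes W: "W \<in> carrier_mat d d" and v: "v \<in> carrier_vec d"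
  shows "char_matrix W a *\<^sub>v v = W *\<^sub>v v - a \<cdot>\<^sub>v v"
proof (rule eq_vecI)
  have C: "char_matrix W a \<in> carrier_mat d d" using W by simp
  fix i assume "i < dim_vec (W *\<^sub>v v - a \<cdot>\<^sub>v v)"
  then have i: "i < d" using W v by simp
  have "(char_matrix W a *\<^sub>v v) $ i = (\<Sum>j<d. char_matrix W a $$ (i, j) * v $ j)"
    by (rule mult_vec_entry[OF C v i])
  also have "\<dots> = (\<Sum>j<d. W $$ (i, j) * v $ j + (if j = i then - a * v $ i else 0))"
    using W i by (intro sum.cong refl) (auto simp: char_matrix_def algebra_simps)
  also have "\<dots> = (\<Sum>j<d. W $$ (i, j) * v $ j) - a * v $ i"
    using i by (simp add: sum.distrib)
  also have "\<dots> = (W *\<^sub>v v - a \<cdot>\<^sub>v v) $ i"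
    using W v i by (simp add: mult_vec_entry[OF W v i])
  finally show "(char_matrix W a *\<^sub>v v) $ i = (W *\<^sub>v v - a \<cdot>\<^sub>v v) $ i" .
qed (insert W v, simp add: char_matrix_def)

lemma ker2:
  assumes W: "W \<in> carrier_mat d d" "is_hermitian W" and v: "v \<in> carrier_vec d"
    and z: "char_matrix W a *\<^sub>v (char_matrix W a *\<^sub>v v) = 0\<^sub>v d"
  shows "char_matrix W a *\<^sub>v v = 0\<^sub>v d"
proof -
  let ?B = "char_matrix W a"
  define w where "w = ?B *\<^sub>v v"
  have w: "w \<in> carrier_vec d" unfolding w_def by (rule mult_mat_vec_carrier[OF char_matrix_closed[OF W(1)] v])
  have Ww: "W *\<^sub>v w = a \<cdot>\<^sub>v w"
  proof -
    have z2: "W *\<^sub>v w - a \<cdot>\<^sub>v w = 0\<^sub>v d" using z char_matrix_mult_vec[OF W(1) w] by (simp add: w_def)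
    show ?thesis
    proof (rule eq_vecI)
      fix i assume "i < dim_vec (a \<cdot>\<^sub>v w)"
      then have i: "i < d" using w by simp
      have "(W *\<^sub>v w - a \<cdot>\<^sub>v w) $ i = 0" using z2 i by simp
      then show "(W *\<^sub>v w) $ i = (a \<cdot>\<^sub>v w) $ i" using i w W by simp
    qed (use W w in simp)
  qed
  show ?thesis
  proof (cases "w = 0\<^sub>v d")
    case True then show ?thesis by (simp add: w_def)
  next
    case False
    have ra: "cnj a = a" by (rule eigen_real[OF W w False Ww])
    have "ip w w = ip (W *\<^sub>v v - a \<cdot>\<^sub>v v) w"
      unfolding w_def char_matrix_mult_vec[OF W(1) v] ..
    also have "\<dots> = ip (W *\<^sub>v v) w - cnj a * ip v w"
      using W v w by (simp add: ip_minus_left[of _ d] ip_smult_left[of _ d])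
    also have "\<dots> = ip v (W *\<^sub>v w) - a * ip v w"
      using herm_ip[OF W v w] ra by simp
    also have "\<dots> = 0" using Ww ip_smult_right[OF v w] by simp
    finally have "w = 0\<^sub>v d" using ip_self_zero[OF w] by simp
    then show ?thesis using False by simp
  qed
qed

lemma kernel_dim_cong: "mat_kernel A = mat_kernel B \<Longrightarrow> dim_col A = dim_col B \<Longrightarrow> kernel_dim A = kernel_dim B"
  unfolding kernel_dim_def by simp

lemma sum_list_eq_le:
  assumes "sum_list (map f L) = sum_list (map g L)" "\<And>x. g x \<le> (f x :: nat)" "x \<in> set L"
  shows "f x = g x"
  using assms
proof (induction L)
  case (Cons a L)
  have le: "sum_list (map g L) \<le> sum_list (map f L)" using Cons.prems(2) by (induction L) (auto intro: add_mono)
  have "g a \<le> f a" using Cons.prems(2) .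
  then have "f a = g a" "sum_list (map f L) = sum_list (map g L)" using Cons.prems(1) le by auto
  then show ?case using Cons by auto
qed simp

lemma jm_diag:
  assumes "\<forall>p\<in>set n_as. fst p = 1"
    and "i < sum_list (map fst n_as)" "j < sum_list (map fst n_as)" "i \<noteq> j"
  shows "jordan_matrix n_as $$ (i, j) = (0::complex)"
  using assms
proof (induction n_as arbitrary: i j)
  case Nil then show ?case by simp
next
  case (Cons p n_as)
  obtain n e where p: "p = (n, e)" by force
  have n: "n = 1" using Cons.prems(1) p by auto
  let ?N = "sum_list (map fst n_as)"
  have dims: "i < dim_row (jordan_block n e) + dim_row (jordan_matrix n_as)"
      "j < dim_col (jordan_block n e) + dim_col (jordan_matrix n_as)"
    using Cons.prems p by auto
  show ?case
    unfolding p jordan_matrix_Cons index_mat_four_block(1)[OF dims]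
  proof -
    consider "i < 1" "j < 1" | "i < 1" "\<not> j < 1" | "\<not> i < 1" "j < 1" | "\<not> i < 1" "\<not> j < 1" by blast
    then show "(if i < dim_row (jordan_block n e) then if j < dim_col (jordan_block n e) then jordan_block n e $$ (i, j)
          else 0\<^sub>m n ?N $$ (i, j - dim_col (jordan_block n e))
     else if j < dim_col (jordan_block n e) then 0\<^sub>m ?N n $$ (i - dim_row (jordan_block n e), j)
          else jordan_matrix n_as $$ (i - dim_row (jordan_block n e), j - dim_col (jordan_block n e))) = 0"
    proof cases
      case 1 then show ?thesis using Cons.prems by simp
    next
      case 2 then show ?thesis using Cons.prems n p by simp
    next
      case 3 then show ?thesis using Cons.prems n p by simp
    next
      case 4
      have "jordan_matrix n_as $$ (i - 1, j - 1) = 0"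
        using Cons.prems 4 n p by (intro Cons.IH) auto
      then show ?thesis using 4 n by simp
    qed
  qed
qed

lemma herm_diag:
  fixes W :: "complex mat"
  assumes W: "W \<in> carrier_mat d d" "is_hermitian W"
  shows "\<exists>P Q J. P \<in> carrier_mat d d \<and> Q \<in> carrier_mat d d \<and> J \<in> carrier_mat d d \<and>
     P * Q = 1\<^sub>m d \<and> Q * P = 1\<^sub>m d \<and> W = P * J * Q \<and> (\<forall>i<d. \<forall>j<d. i \<noteq> j \<longrightarrow> J $$ (i, j) = 0)"
proof -
  obtain as where "char_poly W = (\<Prod>a\<leftarrow>as. [:- a, 1:])"
    using char_poly_factorized[OF W(1)] by blast
  then obtain n_as where jnf: "jordan_nf W n_as" using jordan_nf_exists[OF W(1)] by blast
  have kd: "dim_gen_eigenspace W ev 2 = dim_gen_eigenspace W ev 1" for ev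
  proof -
    let ?B = "char_matrix W ev"
    have B: "?B \<in> carrier_mat d d" using W by simp
    have p1: "?B ^\<^sub>m 1 = ?B" using B by simp
    have p2: "?B ^\<^sub>m 2 = ?B * ?B" using B by (simp add: numeral_2_eq_2)
    have "mat_kernel (?B * ?B) = mat_kernel ?B"
    proof (rule subset_antisym; rule subsetI)
      fix v assume "v \<in> mat_kernel (?B * ?B)"
      then have v: "v \<in> carrier_vec d" and z: "(?B * ?B) *\<^sub>v v = 0\<^sub>v d"
        using B unfolding mat_kernel_def by auto
      have "?B *\<^sub>v (?B *\<^sub>v v) = 0\<^sub>v d" using z B v by simp
      then have "?B *\<^sub>v v = 0\<^sub>v d" by (rule ker2[OF W v])
      then show "v \<in> mat_kernel ?B" using v B unfolding mat_kernel_def by auto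
    next
      fix v assume "v \<in> mat_kernel ?B"
      then have v: "v \<in> carrier_vec d" and z: "?B *\<^sub>v v = 0\<^sub>v d"
        using B unfolding mat_kernel_def by auto
      have z0: "?B *\<^sub>v 0\<^sub>v d = 0\<^sub>v d" using B by auto
      have "(?B * ?B) *\<^sub>v v = 0\<^sub>v d" using z B v z0 by simp
      then show "v \<in> mat_kernel (?B * ?B)" using v B unfolding mat_kernel_def by auto
    qed
    then show ?thesis unfolding dim_gen_eigenspace_def p1 p2
      using B by (intro kernel_dim_cong) auto
  qed
  have ones: "\<forall>p\<in>set n_as. fst p = 1"
  proof
    fix p assume p: "p \<in> set n_as"
    obtain n e where pe: "p = (n, e)" by force
    let ?L = "map fst (filter (\<lambda>(n, e'). e' = e) n_as)"
    have eq: "sum_list (map (min 2) ?L) = sum_list (map (min 1) ?L)"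
      using kd[of e] unfolding dim_gen_eigenspace[OF jnf] by simp
    have mem: "n \<in> set ?L" using p pe by force
    have "min 2 n = min 1 n" by (rule sum_list_eq_le[OF eq _ mem]) auto
    moreover have "n \<noteq> 0" using jnf p pe unfolding jordan_nf_def by force
    ultimately show "fst p = 1" using pe by simp
  qed
  from jnf obtain P Q where wit: "similar_mat_wit W (jordan_matrix n_as) P Q"
    unfolding jordan_nf_def similar_mat_def by blast
  then have c: "P \<in> carrier_mat d d" "Q \<in> carrier_mat d d" "jordan_matrix n_as \<in> carrier_mat d d"
    and pq: "P * Q = 1\<^sub>m d" "Q * P = 1\<^sub>m d" and we: "W = P * jordan_matrix n_as * Q"
    using W unfolding similar_mat_wit_def Let_def by auto
  have "sum_list (map fst n_as) = d" using c(3) jordan_matrix_dim(1)[of n_as] unfolding carrier_mat_def by simp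
  then have "\<forall>i<d. \<forall>j<d. i \<noteq> j \<longrightarrow> jordan_matrix n_as $$ (i, j) = 0"
    using jm_diag[OF ones] by auto
  then show ?thesis using c pq we by blast
qed

lemma mult3_entry:
  assumes P: "P \<in> carrier_mat d d" and X: "X \<in> carrier_mat d d" and Q: "Q \<in> carrier_mat d d"
    and i: "i < d" and j: "j < d"
  shows "(P * X * Q) $$ (i, j) = (\<Sum>a<d. \<Sum>b<d. P $$ (i, a) * X $$ (a, b) * Q $$ (b, j))"
proof -
  have "(P * X * Q) $$ (i, j) = (\<Sum>b<d. (P * X) $$ (i, b) * Q $$ (b, j))"
    by (rule mult_entry[OF mult_carrier_mat[OF P X] Q i j])
  also have "\<dots> = (\<Sum>b<d. (\<Sum>a<d. P $$ (i, a) * X $$ (a, b)) * Q $$ (b, j))"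
    using i by (intro sum.cong refl) (simp add: mult_entry[OF P X])
  also have "\<dots> = (\<Sum>b<d. \<Sum>a<d. P $$ (i, a) * X $$ (a, b) * Q $$ (b, j))"
    by (simp add: sum_distrib_right)
  also have "\<dots> = (\<Sum>a<d. \<Sum>b<d. P $$ (i, a) * X $$ (a, b) * Q $$ (b, j))"
    by (rule sum.swap)
  finally show ?thesis .
qed

lemma diag3_entry:
  assumes P: "P \<in> carrier_mat d d" and X: "X \<in> carrier_mat d d" and Q: "Q \<in> carrier_mat d d"
    and dg: "\<forall>a<d. \<forall>b<d. a \<noteq> b \<longrightarrow> X $$ (a, b) = 0"
    and i: "i < d" and j: "j < d"
  shows "(P * X * Q) $$ (i, j) = (\<Sum>a<d. P $$ (i, a) * X $$ (a, a) * Q $$ (a, j))"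
proof -
  have "(P * X * Q) $$ (i, j) = (\<Sum>a<d. \<Sum>b<d. if b = a then P $$ (i, a) * X $$ (a, a) * Q $$ (a, j) else 0)"
    unfolding mult3_entry[OF P X Q i j] using dg by (intro sum.cong refl) auto
  also have "\<dots> = (\<Sum>a<d. P $$ (i, a) * X $$ (a, a) * Q $$ (a, j))"
    by simp
  finally show ?thesis .
qed

lemma sim_pow:
  assumes P: "P \<in> carrier_mat d d" and X: "X \<in> carrier_mat d d" and Q: "Q \<in> carrier_mat d d"
    and PQ: "P * Q = 1\<^sub>m d" and QP: "Q * P = 1\<^sub>m d"
  shows "(P * X * Q) ^\<^sub>m k = P * X ^\<^sub>m k * Q"
proof (induction k)
  case 0 then show ?case using P Q X PQ by simp
next
  case (Suc k)
  have Xk: "X ^\<^sub>m k \<in> carrier_mat d d" using X by simp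
  have PXk: "P * X ^\<^sub>m k \<in> carrier_mat d d" using P Xk by simp
  have PXQ: "P * X * Q \<in> carrier_mat d d" using P X Q by simp
  have "(P * X * Q) ^\<^sub>m Suc k = (P * X ^\<^sub>m k * Q) * (P * X * Q)" using Suc by simp
  also have "\<dots> = (P * X ^\<^sub>m k) * (Q * (P * X * Q))"
    by (rule assoc_mult_mat[OF PXk Q PXQ])
  also have "Q * (P * X * Q) = X * Q"
  proof -
    have "Q * (P * X * Q) = (Q * (P * X)) * Q" by (rule assoc_mult_mat[OF Q mult_carrier_mat[OF P X] Q, symmetric])
    also have "Q * (P * X) = (Q * P) * X" by (rule assoc_mult_mat[OF Q P X, symmetric])
    also have "\<dots> = X" using QP X by simp
    finally show ?thesis .
  qed
  also have "(P * X ^\<^sub>m k) * (X * Q) = (P * X ^\<^sub>m k * X) * Q" by (rule assoc_mult_mat[OF PXk X Q, symmetric])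
  also have "P * X ^\<^sub>m k * X = P * (X ^\<^sub>m k * X)" by (rule assoc_mult_mat[OF P Xk X])
  finally show ?case by simp
qed

lemma mexp_sim:
  fixes P X Q :: "complex mat"
  assumes P: "P \<in> carrier_mat d d" and X: "X \<in> carrier_mat d d" and Q: "Q \<in> carrier_mat d d"
    and PQ: "P * Q = 1\<^sub>m d" and QP: "Q * P = 1\<^sub>m d"
  shows "mexp (P * X * Q) = P * mexp X * Q"
proof (rule eq_matI)
  have PXQ: "P * X * Q \<in> carrier_mat d d" using P X Q by simp
  have E: "mexp X \<in> carrier_mat d d" using X by (rule mexp_carrier)
  fix i j assume "i < dim_row (P * mexp X * Q)" "j < dim_col (P * mexp X * Q)"
  then have i: "i < d" and j: "j < d" using P Q by auto
  have s1: "(\<lambda>k. (1 / of_nat (fact k)) * ((P * X * Q) ^\<^sub>m k) $$ (i, j)) sums (mexp (P * X * Q) $$ (i, j))"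
    by (rule mexp_sums[OF PXQ i j])
  have s2: "(\<lambda>k. \<Sum>a<d. \<Sum>b<d. P $$ (i, a) * ((1 / of_nat (fact k)) * (X ^\<^sub>m k) $$ (a, b)) * Q $$ (b, j))
      sums (\<Sum>a<d. \<Sum>b<d. P $$ (i, a) * mexp X $$ (a, b) * Q $$ (b, j))"
    by (intro sums_sum sums_mult sums_mult2 mexp_sums[OF X]) auto
  have eq: "(1 / of_nat (fact k)) * ((P * X * Q) ^\<^sub>m k) $$ (i, j)
      = (\<Sum>a<d. \<Sum>b<d. P $$ (i, a) * ((1 / of_nat (fact k)) * (X ^\<^sub>m k) $$ (a, b)) * Q $$ (b, j))" for k
    unfolding sim_pow[OF P X Q PQ QP] mult3_entry[OF P pow_carrier_mat[OF X] Q i j]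
    by (simp add: sum_distrib_left mult_ac)
  have "mexp (P * X * Q) $$ (i, j) = (\<Sum>a<d. \<Sum>b<d. P $$ (i, a) * mexp X $$ (a, b) * Q $$ (b, j))"
    using s1 s2 unfolding eq by (rule sums_unique2)
  also have "\<dots> = (P * mexp X * Q) $$ (i, j)" by (rule mult3_entry[OF P E Q i j, symmetric])
  finally show "mexp (P * X * Q) $$ (i, j) = (P * mexp X * Q) $$ (i, j)" .
qed (use P Q in \<open>simp_all add: mexp_def\<close>)

lemma diag_pow:
  fixes X :: "complex mat"
  assumes X: "X \<in> carrier_mat d d" and dg: "\<forall>a<d. \<forall>b<d. a \<noteq> b \<longrightarrow> X $$ (a, b) = 0"
    and i: "i < d" and j: "j < d"
  shows "(X ^\<^sub>m k) $$ (i, j) = (if i = j then X $$ (i, i) ^ k else 0)"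
  using i j
proof (induction k arbitrary: j)
  case 0 then show ?case using X by simp
next
  case (Suc k)
  have "(X ^\<^sub>m Suc k) $$ (i, j) = (\<Sum>l<d. (X ^\<^sub>m k) $$ (i, l) * X $$ (l, j))"
    using X Suc.prems by (simp only: pow_mat.simps, intro mult_entry[of _ d d _ d]) auto
  also have "\<dots> = (\<Sum>l<d. if l = i then X $$ (i, i) ^ k * X $$ (i, j) else 0)"
    using Suc by (intro sum.cong refl) auto
  also have "\<dots> = (if i = j then X $$ (i, i) ^ Suc k else 0)"
    using Suc.prems dg by auto
  finally show ?case .
qed

lemma exp_series_complex: "(\<lambda>k. (1 / of_nat (fact k)) * x ^ k) sums exp (x::complex)"
proof -
  have "(\<lambda>k. x ^ k /\<^sub>R fact k) sums exp x" by (rule exp_converges)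
  moreover have "x ^ k /\<^sub>R fact k = (1 / of_nat (fact k)) * x ^ k" for k
    by (simp add: scaleR_conv_of_real divide_inverse)
  ultimately show ?thesis by simp
qed

lemma mexp_diag:
  fixes X :: "complex mat"
  assumes X: "X \<in> carrier_mat d d" and dg: "\<forall>a<d. \<forall>b<d. a \<noteq> b \<longrightarrow> X $$ (a, b) = 0"
    and i: "i < d" and j: "j < d"
  shows "mexp X $$ (i, j) = (if i = j then exp (X $$ (i, i)) else 0)"
proof -
  have s: "(\<lambda>k. (1 / of_nat (fact k)) * (if i = j then X $$ (i, i) ^ k else 0)) sums mexp X $$ (i, j)"
    using mexp_sums[OF X i j] by (simp add: diag_pow[OF X dg i j])
  show ?thesis
  proof (cases "i = j")
    case True
    then show ?thesis using s exp_series_complex[of "X $$ (i, i)"] sums_unique2 by auto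
  next
    case False
    then show ?thesis using s sums_zero sums_unique2 by auto
  qed
qed

lemma smult_sim:
  fixes P X Q :: "complex mat"
  assumes P: "P \<in> carrier_mat d d" and X: "X \<in> carrier_mat d d" and Q: "Q \<in> carrier_mat d d"
  shows "c \<cdot>\<^sub>m (P * X * Q) = P * (c \<cdot>\<^sub>m X) * Q"
  using P X Q by (simp add: mult_smult_distrib[of _ d d] mult_smult_assoc_mat[of _ d d])

lemma interp:
  fixes Z :: "complex set"
  assumes "finite Z"
  shows "\<exists>p. \<forall>z\<in>Z. poly p z = f z"
  using assms
proof (induction Z rule: finite_induct)
  case empty then show ?case by simp
next
  case (insert z F)
  then obtain q where q: "\<forall>w\<in>F. poly q w = f w" by blast
  define L where "L = (\<Prod>w\<in>F. [:- w, 1:])"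
  have Lw: "poly L w = 0" if "w \<in> F" for w
    unfolding L_def poly_prod using insert(1) that by (auto intro: prod_zero)
  have Lz: "poly L z \<noteq> 0"
    unfolding L_def poly_prod using insert(1,2) by (auto simp: prod_zero_iff)
  define p where "p = q + Polynomial.smult ((f z - poly q z) / poly L z) L"
  have "\<forall>w\<in>insert z F. poly p w = f w"
    using q Lw Lz unfolding p_def by auto
  then show ?case by blast
qed

lemma exp_inj:
  fixes x y :: real
  assumes x: "\<bar>x\<bar> < pi" and y: "\<bar>y\<bar> < pi" and e: "exp (- \<i> * x) = exp (- \<i> * y)"
  shows "x = y"
proof -
  obtain n :: int where n: "- \<i> * x = - \<i> * y + (of_int (2 * n) * pi) * \<i>"
    using e unfolding exp_eq by blast
  then have "Im (- \<i> * x) = Im (- \<i> * y + (of_int (2 * n) * pi) * \<i>)" by simp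
  then have xy: "y - x = 2 * n * pi" by simp
  have "\<bar>real_of_int n\<bar> * (2 * pi) < 2 * pi"
  proof -
    have "\<bar>2 * n * pi\<bar> < 2 * pi" using x y xy[symmetric] by linarith
    then show ?thesis by (simp add: abs_mult)
  qed
  then have "\<bar>real_of_int n\<bar> < 1" by simp
  then have "n = 0" by linarith
  then show ?thesis using xy by simp
qed

lemma vnorm_smult: "vnorm (c \<cdot>\<^sub>v x) = cmod c * vnorm x"
proof -
  have "(\<Sum>i<dim_vec x. (cmod ((c \<cdot>\<^sub>v x) $ i))^2) = (cmod c)^2 * (\<Sum>i<dim_vec x. (cmod (x $ i))^2)"
    by (simp add: sum_distrib_left norm_mult power_mult_distrib)
  then show ?thesis unfolding vnorm_def by (simp add: real_sqrt_mult)
qed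

lemma vnorm_pos: assumes "x \<in> carrier_vec d" "x \<noteq> 0\<^sub>v d" shows "vnorm x > 0"
proof -
  obtain i where i: "i < d" "x $ i \<noteq> 0" using assms by (metis carrier_vecD eq_vecI index_zero_vec)
  have "0 < (cmod (x $ i))^2" using i by simp
  also have "\<dots> \<le> (\<Sum>i<dim_vec x. (cmod (x $ i))^2)"
    using i assms by (intro member_le_sum) auto
  finally show ?thesis unfolding vnorm_def by simp
qed

lemma vnorm_entry: "i < dim_vec x \<Longrightarrow> cmod (x $ i) \<le> vnorm x"
proof -
  assume i: "i < dim_vec x"
  have "(cmod (x $ i))^2 \<le> (\<Sum>i<dim_vec x. (cmod (x $ i))^2)"
    using i by (intro member_le_sum) auto
  then have "sqrt ((cmod (x $ i))^2) \<le> vnorm x" unfolding vnorm_def by (rule real_sqrt_le_mono)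
  then show ?thesis by simp
qed

lemma op_norm_bdd:
  fixes W :: "complex mat"
  assumes W: "W \<in> carrier_mat d d"
  shows "bdd_above {vnorm (W *\<^sub>v x) | x. x \<in> carrier_vec (dim_col W) \<and> vnorm x \<le> 1}"
proof -
  let ?M = "\<Sum>a<d. \<Sum>b<d. cmod (W $$ (a, b))"
  have "vnorm (W *\<^sub>v x) \<le> sqrt (d * ?M^2)" if x: "x \<in> carrier_vec d" and n: "vnorm x \<le> 1" for x
  proof -
    have "cmod ((W *\<^sub>v x) $ i) \<le> ?M" if i: "i < d" for i
    proof -
      have "cmod ((W *\<^sub>v x) $ i) \<le> (\<Sum>j<d. cmod (W $$ (i, j)) * cmod (x $ j))"
        unfolding mult_vec_entry[OF W x i] by (simp add: norm_mult[symmetric] sum_norm_le)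
      also have "\<dots> \<le> (\<Sum>j<d. cmod (W $$ (i, j)))"
      proof (rule sum_mono)
        fix j assume "j \<in> {..<d}"
        then have "cmod (x $ j) \<le> 1" using vnorm_entry[of j x] x n by auto
        then show "cmod (W $$ (i, j)) * cmod (x $ j) \<le> cmod (W $$ (i, j))"
          by (simp add: mult_left_le)
      qed
      also have "\<dots> \<le> ?M" using i by (intro member_le_sum[where f = "\<lambda>a. \<Sum>b<d. cmod (W $$ (a, b))"]) (auto intro: sum_nonneg)
      finally show ?thesis .
    qed
    then have "(\<Sum>i<d. (cmod ((W *\<^sub>v x) $ i))^2) \<le> (\<Sum>i<d. ?M^2)"
      by (intro sum_mono power_mono) auto
    then show ?thesis unfolding vnorm_def using W by (simp add: real_sqrt_le_mono)
  qed
  then show ?thesis using W unfolding bdd_above_def by auto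
qed

lemma eigen_le_op_norm:
  fixes W :: "complex mat"
  assumes W: "W \<in> carrier_mat d d" and x: "x \<in> carrier_vec d" and nz: "x \<noteq> 0\<^sub>v d"
    and e: "W *\<^sub>v x = a \<cdot>\<^sub>v x"
  shows "cmod a \<le> op_norm W"
proof -
  define y where "y = (1 / vnorm x) \<cdot>\<^sub>v x"
  have pos: "vnorm x > 0" by (rule vnorm_pos[OF x nz])
  have y: "y \<in> carrier_vec (dim_col W)" using x W unfolding y_def by simp
  have ny: "vnorm y = 1" unfolding y_def vnorm_smult using pos by (simp add: norm_divide)
  have "W *\<^sub>v y = a \<cdot>\<^sub>v y"
    unfolding y_def using W x e by (simp add: mult_mat_vec smult_smult_assoc mult.commute)
  then have "vnorm (W *\<^sub>v y) = cmod a" using ny by (simp add: vnorm_smult)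
  then have "cmod a \<in> {vnorm (W *\<^sub>v x) | x. x \<in> carrier_vec (dim_col W) \<and> vnorm x \<le> 1}"
    using y ny by (metis (mono_tags, lifting) mem_Collect_eq order_refl)
  then show ?thesis unfolding op_norm_def by (rule cSup_upper[OF _ op_norm_bdd[OF W]])
qed

lemma eigen_col:
  fixes W P Q J :: "complex mat"
  assumes P: "P \<in> carrier_mat d d" and Q: "Q \<in> carrier_mat d d" and J: "J \<in> carrier_mat d d"
    and QP: "Q * P = 1\<^sub>m d" and WE: "W = P * J * Q"
    and dg: "\<forall>a<d. \<forall>b<d. a \<noteq> b \<longrightarrow> J $$ (a, b) = 0" and a: "a < d"
  shows "W *\<^sub>v col P a = J $$ (a, a) \<cdot>\<^sub>v col P a" "col P a \<noteq> 0\<^sub>v d" "col P a \<in> carrier_vec d"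
proof -
  show cP: "col P a \<in> carrier_vec d" by (rule carrier_vecI, simp only: dim_col carrier_matD(1)[OF P])
  have WP: "W * P = P * J"
  proof -
    have "W * P = P * J * (Q * P)" unfolding WE by (rule assoc_mult_mat[OF mult_carrier_mat[OF P J] Q P])
    then show ?thesis using QP P J by simp
  qed
  have W: "W \<in> carrier_mat d d" using P J Q WE by simp
  show "W *\<^sub>v col P a = J $$ (a, a) \<cdot>\<^sub>v col P a"
  proof (rule eq_vecI)
    fix i assume "i < dim_vec (J $$ (a, a) \<cdot>\<^sub>v col P a)"
    then have i: "i < d" using P by simp
    have "(W *\<^sub>v col P a) $ i = col (W * P) a $ i" by (simp only: col_mult2[OF W P a])
    also have "\<dots> = (W * P) $$ (i, a)" using W P i a by (intro index_col) auto
    also have "\<dots> = (\<Sum>l<d. P $$ (i, l) * J $$ (l, a))" unfolding WP by (rule mult_entry[OF P J i a])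
    also have "\<dots> = (\<Sum>l<d. if l = a then P $$ (i, a) * J $$ (a, a) else 0)"
      using dg a by (intro sum.cong refl) auto
    also have "\<dots> = P $$ (i, a) * J $$ (a, a)" using a by simp
    also have "\<dots> = (J $$ (a, a) \<cdot>\<^sub>v col P a) $ i" using a i P by simp
    finally show "(W *\<^sub>v col P a) $ i = (J $$ (a, a) \<cdot>\<^sub>v col P a) $ i" .
  next
    show "dim_vec (W *\<^sub>v col P a) = dim_vec (J $$ (a, a) \<cdot>\<^sub>v col P a)" using W P by simp
  qed
  show "col P a \<noteq> 0\<^sub>v d"
  proof
    assume z: "col P a = 0\<^sub>v d"
    have "(Q * P) $$ (a, a) = (\<Sum>l<d. Q $$ (a, l) * P $$ (l, a))" by (rule mult_entry[OF Q P a a])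
    also have "\<dots> = 0"
    proof (rule sum.neutral, rule ballI)
      fix l assume "l \<in> {..<d}"
      then have "P $$ (l, a) = col P a $ l" using P a by simp
      then show "Q $$ (a, l) * P $$ (l, a) = 0" using z \<open>l \<in> {..<d}\<close> by simp
    qed
    finally show False using QP a by simp
  qed
qed

theorem mainTheorem12:
  fixes n m :: nat and H Hj W :: "complex mat" and T :: real
  assumes "H \<in> carrier_mat (2^n) (2^n)" and "is_hermitian H" and "pauli_sparsity n H \<le> m"
    and "Hj \<in> carrier_mat (2^n) (2^n)" and "is_hermitian Hj" and "pauli_sparsity n Hj \<le> m"
    and "W \<in> carrier_mat (2^n) (2^n)" and "is_hermitian W" and "op_norm W < pi"
    and "\<exists>\<phi>::real. mexp ((- \<i>) \<cdot>\<^sub>m W) =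
           exp (\<i> * complex_of_real \<phi>) \<cdot>\<^sub>m
             (mexp ((\<i> * complex_of_real T) \<cdot>\<^sub>m H) * mexp ((- \<i> * complex_of_real T) \<cdot>\<^sub>m Hj))"
  shows "pauli_sparsity n W \<le> 4 ^ m"
proof -
  note Hc = assms(1) and Jc = assms(4) and Wc = assms(7)
  obtain \<phi> :: real where U: "mexp ((- \<i>) \<cdot>\<^sub>m W) =
           exp (\<i> * complex_of_real \<phi>) \<cdot>\<^sub>m
             (mexp ((\<i> * complex_of_real T) \<cdot>\<^sub>m H) * mexp ((- \<i> * complex_of_real T) \<cdot>\<^sub>m Hj))"
    using assms(10) by blast
  let ?d = "2^n :: nat"
  define SH where "SH = {s \<in> pauli_strings n. pauli_coeff n H s \<noteq> 0}"
  define SJ where "SJ = {s \<in> pauli_strings n. pauli_coeff n Hj s \<noteq> 0}"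
  define S where "S = SH \<union> SJ"
  define K where "K = gen n S"
  have Ssub: "S \<subseteq> pauli_strings n" unfolding S_def SH_def SJ_def by auto
  have Sfin: "finite S" using Ssub strings_finite finite_subset by blast
  have cardS: "card S \<le> 2 * m"
  proof -
    have "card S \<le> card SH + card SJ" unfolding S_def by (rule card_Un_le)
    also have "\<dots> \<le> m + m" using assms(3,6) unfolding SH_def SJ_def pauli_sparsity_def by simp
    finally show ?thesis by simp
  qed
  have Ksub: "K \<subseteq> pauli_strings n" unfolding K_def by (rule gen_sub[OF Ssub])
  have Kcl: "\<And>s t. s \<in> K \<Longrightarrow> t \<in> K \<Longrightarrow> sxor s t \<in> K" unfolding K_def by (rule gen_closed[OF Ssub])
  have Kz: "replicate n 0 \<in> K" unfolding K_def by (rule gen.gz)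
  have Kfin: "finite K" using Ksub strings_finite finite_subset by blast
  have cardK: "card K \<le> 4 ^ m"
  proof -
    have "card K \<le> 2 ^ card S" unfolding K_def by (rule gen_card[OF Sfin Ssub])
    also have "\<dots> \<le> 2 ^ (2 * m)" using cardS by (intro power_increasing) auto
    also have "\<dots> = 4 ^ m" by (simp add: power_mult)
    finally show ?thesis .
  qed
  have SK: "S \<subseteq> K" unfolding K_def using gen_S[OF Ssub] by blast
  have HK: "inK n K H" unfolding inK_def using SK unfolding S_def SH_def by auto
  have JK: "inK n K Hj" unfolding inK_def using SK unfolding S_def SJ_def by auto
  have A1: "(\<i> * complex_of_real T) \<cdot>\<^sub>m H \<in> carrier_mat ?d ?d" using Hc by simp
  have A2: "(- \<i> * complex_of_real T) \<cdot>\<^sub>m Hj \<in> carrier_mat ?d ?d" using Jc by simp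
  have E1: "mexp ((\<i> * complex_of_real T) \<cdot>\<^sub>m H) \<in> carrier_mat ?d ?d" by (rule mexp_carrier[OF A1])
  have E2: "mexp ((- \<i> * complex_of_real T) \<cdot>\<^sub>m Hj) \<in> carrier_mat ?d ?d" by (rule mexp_carrier[OF A2])
  have E1K: "inK n K (mexp ((\<i> * complex_of_real T) \<cdot>\<^sub>m H))"
    by (rule inK_mexp[OF Ksub Kcl Kz A1 inK_smult[OF Hc HK]])
  have E2K: "inK n K (mexp ((- \<i> * complex_of_real T) \<cdot>\<^sub>m Hj))"
    by (rule inK_mexp[OF Ksub Kcl Kz A2 inK_smult[OF Jc JK]])
  define U where "U = mexp ((- \<i>) \<cdot>\<^sub>m W)"
  have Uc: "U \<in> carrier_mat ?d ?d" unfolding U_def using Wc by (intro mexp_carrier) simp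
  have UK: "inK n K U"
    unfolding U_def U by (rule inK_smult[OF mult_carrier_mat[OF E1 E2] inK_mult[OF Ksub Kcl E1 E2 E1K E2K]])
  obtain P Q J where P: "P \<in> carrier_mat ?d ?d" and Q: "Q \<in> carrier_mat ?d ?d" and J: "J \<in> carrier_mat ?d ?d"
    and PQ: "P * Q = 1\<^sub>m ?d" and QP: "Q * P = 1\<^sub>m ?d" and WE: "W = P * J * Q"
    and dg: "\<forall>i<?d. \<forall>j<?d. i \<noteq> j \<longrightarrow> J $$ (i, j) = 0"
    using herm_diag[OF Wc assms(8)] by blast
  have Jreal: "J $$ (a, a) = complex_of_real (Re (J $$ (a, a)))" and Jlt: "\<bar>Re (J $$ (a, a))\<bar> < pi"
    if a: "a < ?d" for a
  proof -
    note ec = eigen_col[OF P Q J QP WE dg a]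
    have "cnj (J $$ (a, a)) = J $$ (a, a)" by (rule eigen_real[OF Wc assms(8) ec(3) ec(2) ec(1)])
    then show re: "J $$ (a, a) = complex_of_real (Re (J $$ (a, a)))"
      by (metis Reals_cnj_iff complex_is_Real_iff of_real_Re)
    have "cmod (J $$ (a, a)) \<le> op_norm W" by (rule eigen_le_op_norm[OF Wc ec(3) ec(2) ec(1)])
    then have "cmod (J $$ (a, a)) < pi" using assms(9) by simp
    then show "\<bar>Re (J $$ (a, a))\<bar> < pi" using re by (metis norm_of_real)
  qed
  define D where "D = (- \<i>) \<cdot>\<^sub>m J"
  have Dc: "D \<in> carrier_mat ?d ?d" unfolding D_def using J by simp
  have Ddg: "\<forall>i<?d. \<forall>j<?d. i \<noteq> j \<longrightarrow> D $$ (i, j) = 0" unfolding D_def using dg J by simp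
  define E where "E = mexp D"
  have Ec: "E \<in> carrier_mat ?d ?d" unfolding E_def by (rule mexp_carrier[OF Dc])
  have Eent: "E $$ (i, j) = (if i = j then exp (- \<i> * J $$ (i, i)) else 0)" if "i < ?d" "j < ?d" for i j
    unfolding E_def using mexp_diag[OF Dc Ddg that] that J by (simp add: D_def)
  have Edg: "\<forall>i<?d. \<forall>j<?d. i \<noteq> j \<longrightarrow> E $$ (i, j) = 0" using Eent by simp
  have UE: "U = P * E * Q"
    unfolding U_def E_def D_def WE smult_sim[OF P J Q] by (rule mexp_sim[OF P _ Q PQ QP]) (use J in simp)
  define Z where "Z = (\<lambda>a. exp (- \<i> * J $$ (a, a))) ` {..<?d}"
  define f where "f = (\<lambda>z. J $$ (SOME a. a < ?d \<and> z = exp (- \<i> * J $$ (a, a)), SOME a. a < ?d \<and> z = exp (- \<i> * J $$ (a, a))))"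
  obtain p where p: "\<forall>z\<in>Z. poly p z = f z" using interp[of Z f] unfolding Z_def by blast
  have pE: "poly p (exp (- \<i> * J $$ (a, a))) = J $$ (a, a)" if a: "a < ?d" for a
  proof -
    let ?z = "exp (- \<i> * J $$ (a, a))"
    define b where "b = (SOME b. b < ?d \<and> ?z = exp (- \<i> * J $$ (b, b)))"
    have "\<exists>b. b < ?d \<and> ?z = exp (- \<i> * J $$ (b, b))" using a by blast
    then have "b < ?d \<and> ?z = exp (- \<i> * J $$ (b, b))" unfolding b_def by (rule someI_ex)
    then have b: "b < ?d" "?z = exp (- \<i> * J $$ (b, b))" by auto
    have "exp (- \<i> * complex_of_real (Re (J $$ (a, a)))) = exp (- \<i> * complex_of_real (Re (J $$ (b, b))))"
      using b(2) Jreal[OF a] Jreal[OF b(1)] by simp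
    then have "Re (J $$ (a, a)) = Re (J $$ (b, b))" by (rule exp_inj[OF Jlt[OF a] Jlt[OF b(1)]])
    then have "J $$ (b, b) = J $$ (a, a)" using Jreal[OF a] Jreal[OF b(1)] by simp
    moreover have "poly p ?z = J $$ (b, b)" using p a unfolding Z_def f_def b_def by auto
    ultimately show ?thesis by simp
  qed
  have Wexp: "W $$ (i, j) = (\<Sum>k\<in>{..degree p}. coeff p k * (U ^\<^sub>m k) $$ (i, j))"
    if i: "i < ?d" and j: "j < ?d" for i j
  proof -
    have "(\<Sum>k\<in>{..degree p}. coeff p k * (U ^\<^sub>m k) $$ (i, j))
        = (\<Sum>k\<in>{..degree p}. coeff p k * (\<Sum>a<?d. P $$ (i, a) * E $$ (a, a) ^ k * Q $$ (a, j)))"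
    proof (intro sum.cong refl arg_cong2[where f = times])
      fix k
      have Ek: "E ^\<^sub>m k \<in> carrier_mat ?d ?d" using Ec by simp
      have Ekdg: "\<forall>a<?d. \<forall>b<?d. a \<noteq> b \<longrightarrow> (E ^\<^sub>m k) $$ (a, b) = 0"
        using diag_pow[OF Ec Edg] by simp
      have "(U ^\<^sub>m k) $$ (i, j) = (P * E ^\<^sub>m k * Q) $$ (i, j)" unfolding UE sim_pow[OF P Ec Q PQ QP] ..
      also have "\<dots> = (\<Sum>a<?d. P $$ (i, a) * (E ^\<^sub>m k) $$ (a, a) * Q $$ (a, j))"
        by (rule diag3_entry[OF P Ek Q Ekdg i j])
      also have "\<dots> = (\<Sum>a<?d. P $$ (i, a) * E $$ (a, a) ^ k * Q $$ (a, j))"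
        using diag_pow[OF Ec Edg] by simp
      finally show "(U ^\<^sub>m k) $$ (i, j) = (\<Sum>a<?d. P $$ (i, a) * E $$ (a, a) ^ k * Q $$ (a, j))" .
    qed
    also have "\<dots> = (\<Sum>a<?d. P $$ (i, a) * (\<Sum>k\<in>{..degree p}. coeff p k * E $$ (a, a) ^ k) * Q $$ (a, j))"
      by (simp add: sum_distrib_left sum_distrib_right sum.swap[of _ "{..degree p}"] mult_ac)
    also have "\<dots> = (\<Sum>a<?d. P $$ (i, a) * J $$ (a, a) * Q $$ (a, j))"
    proof (intro sum.cong refl)
      fix a assume "a \<in> {..<?d}"
      then have a: "a < ?d" by simp
      have "(\<Sum>k\<in>{..degree p}. coeff p k * E $$ (a, a) ^ k) = poly p (E $$ (a, a))"
        by (simp add: poly_altdef)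
      also have "\<dots> = J $$ (a, a)" using Eent[OF a a] pE[OF a] by simp
      finally show "P $$ (i, a) * (\<Sum>k\<in>{..degree p}. coeff p k * E $$ (a, a) ^ k) * Q $$ (a, j)
          = P $$ (i, a) * J $$ (a, a) * Q $$ (a, j)" by simp
    qed
    also have "\<dots> = W $$ (i, j)" unfolding WE by (rule diag3_entry[OF P J Q dg i j, symmetric])
    finally show ?thesis by simp
  qed
  have WK: "inK n K W"
    by (rule inK_lin[OF Wc finite_atMost _ _ Wexp]) (use Uc inK_pow[OF Ksub Kcl Kz Uc UK] in auto)
  have "{s \<in> pauli_strings n. pauli_coeff n W s \<noteq> 0} \<subseteq> K"
    using WK unfolding inK_def by auto
  then have "pauli_sparsity n W \<le> card K"
    unfolding pauli_sparsity_def by (rule card_mono[OF Kfin])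
  then show ?thesis using cardK by simp
qed

end
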